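(* Let $p$ be a prime, $n$ a positive integer, $S\subseteq S_n$ containing the identity and $G$ the subgroup generated by $S$. Suppose $x_0,x_1,\dots,x_{n-1}$ is a basis of $\mathbb{Z}_p^n$ such that for every $j\in\{0,\dots,n-1\}$ and every $g\in G$, the vector $x_j-g\cdot x_j$ lies in the span of $x_0,\dots,x_{j-1}$ (the zero space when $j=0$). For $i\in\{1,\dots,p^n-1\}$ let $y_i=x_{v_p(i)}$, where $v_p$ is the $p$-adic valuation. Then $y_1,\dots,y_{p^n-1}$ is a winning sequence of moves in the $(S,p)$-game.
   Context: For $g\in S_n$ and $x\in\mathbb{Z}_p^n$, $g\cdot x$ is the vector $x'$ with $x'_{g(i)}=x_i$. The $(S,m)$-game: $n$ counters at positions $1,\dots,n$, each showing an element of $\mathbb{Z}_m$; a configuration is a vector in $\mathbb{Z}_m^n$, initially arbitrary and unknown. Each turn the player chooses a move $y\in\mathbb{Z}_m^n$ added coordinatewise, then an adversarially chosen $\sigma\in S$ is applied, replacing $x$ by $\sigma\cdot x$. The player wins if at some moment (including initially) all counters show $0$. A finite sequence of moves is winning if it forces the zero configuration at some time for every initial configuration and every choice of permutations. *)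

theory Defs
  imports "HOL-Algebra.Sym_Groups" "HOL-Algebra.Generated_Groups"
    "HOL-Number_Theory.Number_Theory"
begin

text \<open>Vectors of Z_p^n are represented by integer-valued functions on positions 1..n,
  read modulo p; coordinates outside {1..n} are irrelevant.\<close>

definition perm_act :: "(nat \<Rightarrow> nat) \<Rightarrow> (nat \<Rightarrow> int) \<Rightarrow> (nat \<Rightarrow> int)" where
  "perm_act g x = (\<lambda>i. x (Hilbert_Choice.inv g i))"

definition vec_eq_mod :: "int \<Rightarrow> nat \<Rightarrow> (nat \<Rightarrow> int) \<Rightarrow> (nat \<Rightarrow> int) \<Rightarrow> bool" where
  "vec_eq_mod p n u v \<longleftrightarrow> (\<forall>i\<in>{1..n}. [u i = v i] (mod p))"

definition in_span_mod :: "int \<Rightarrow> nat \<Rightarrow> (nat \<Rightarrow> nat \<Rightarrow> int) \<Rightarrow> nat set \<Rightarrow> (nat \<Rightarrow> int) \<Rightarrow> bool" where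
  "in_span_mod p n x K v \<longleftrightarrow> (\<exists>c :: nat \<Rightarrow> int. vec_eq_mod p n v (\<lambda>i. \<Sum>k\<in>K. c k * x k i))"

definition is_basis_mod :: "int \<Rightarrow> nat \<Rightarrow> (nat \<Rightarrow> nat \<Rightarrow> int) \<Rightarrow> bool" where
  "is_basis_mod p n x \<longleftrightarrow>
     (\<forall>c :: nat \<Rightarrow> int. vec_eq_mod p n (\<lambda>i. \<Sum>k<n. c k * x k i) (\<lambda>_. 0) \<longrightarrow> (\<forall>k<n. [c k = 0] (mod p)))
   \<and> (\<forall>v. in_span_mod p n x {..<n} v)"

primrec game_config :: "(nat \<Rightarrow> nat \<Rightarrow> int) \<Rightarrow> (nat \<Rightarrow> nat \<Rightarrow> nat) \<Rightarrow> (nat \<Rightarrow> int) \<Rightarrow> nat \<Rightarrow> nat \<Rightarrow> int" where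
  "game_config y \<sigma> c 0 = c"
| "game_config y \<sigma> c (Suc t) = perm_act (\<sigma> t) (\<lambda>i. game_config y \<sigma> c t i + y (Suc t) i)"

definition winning_seq :: "(nat \<Rightarrow> nat) set \<Rightarrow> int \<Rightarrow> nat \<Rightarrow> nat \<Rightarrow> (nat \<Rightarrow> nat \<Rightarrow> int) \<Rightarrow> bool" where
  "winning_seq S p n m y \<longleftrightarrow>
     (\<forall>c \<sigma>. (\<forall>t<m. \<sigma> t \<in> S) \<longrightarrow>
        (\<exists>t\<le>m. vec_eq_mod p n (game_config y \<sigma> c t) (\<lambda>_. 0)))"

end

theory Submission
  imports Defs
begin

lemma span_zero: "in_span_mod p n x K (\<lambda>_. 0)"
  unfolding in_span_mod_def vec_eq_mod_def
  by (rule exI[of _ "\<lambda>_. 0"]) simp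

lemma span_cong:
  assumes "vec_eq_mod p n v w" "in_span_mod p n x K v"
  shows "in_span_mod p n x K w"
  using assms unfolding in_span_mod_def vec_eq_mod_def
  by (meson cong_sym cong_trans)

lemma span_add:
  assumes "in_span_mod p n x K v" "in_span_mod p n x K w"
  shows "in_span_mod p n x K (\<lambda>i. v i + w i)"
proof -
  obtain c1 where c1: "vec_eq_mod p n v (\<lambda>i. \<Sum>k\<in>K. c1 k * x k i)"
    using assms(1) unfolding in_span_mod_def by blast
  obtain c2 where c2: "vec_eq_mod p n w (\<lambda>i. \<Sum>k\<in>K. c2 k * x k i)"
    using assms(2) unfolding in_span_mod_def by blast
  have "vec_eq_mod p n (\<lambda>i. v i + w i) (\<lambda>i. \<Sum>k\<in>K. (c1 k + c2 k) * x k i)"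
    using c1 c2 unfolding vec_eq_mod_def
    by (auto simp: distrib_right sum.distrib intro: cong_add)
  thus ?thesis unfolding in_span_mod_def by (intro exI[of _ "\<lambda>k. c1 k + c2 k"])
qed

lemma span_scale:
  assumes "in_span_mod p n x K v"
  shows "in_span_mod p n x K (\<lambda>i. a * v i)"
proof -
  obtain c1 where c1: "vec_eq_mod p n v (\<lambda>i. \<Sum>k\<in>K. c1 k * x k i)"
    using assms(1) unfolding in_span_mod_def by blast
  have "vec_eq_mod p n (\<lambda>i. a * v i) (\<lambda>i. \<Sum>k\<in>K. (a * c1 k) * x k i)"
    using c1 unfolding vec_eq_mod_def
    by (auto simp: sum_distrib_left[symmetric] mult.assoc intro: cong_mult)
  thus ?thesis unfolding in_span_mod_def by (intro exI[of _ "\<lambda>k. a * c1 k"])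
qed

lemma span_neg:
  assumes "in_span_mod p n x K v"
  shows "in_span_mod p n x K (\<lambda>i. - v i)"
  using span_scale[OF assms, of "-1"] by simp

lemma span_diff:
  assumes "in_span_mod p n x K v" "in_span_mod p n x K w"
  shows "in_span_mod p n x K (\<lambda>i. v i - w i)"
  using span_add[OF assms(1) span_neg[OF assms(2)]] by simp

lemma span_basis:
  assumes "finite K" "k \<in> K"
  shows "in_span_mod p n x K (x k)"
proof -
  have e: "(\<Sum>j\<in>K. (if j = k then 1 else 0) * x j i) = x k i" for i
  proof -
    have "(\<Sum>j\<in>K. (if j = k then 1 else 0) * x j i) = (\<Sum>j\<in>K. if k = j then x j i else 0)"
      by (rule sum.cong) auto
    thus ?thesis using assms by simp
  qed
  have "vec_eq_mod p n (x k) (\<lambda>i. \<Sum>j\<in>K. (if j = k then 1 else 0) * x j i)"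
    unfolding e unfolding vec_eq_mod_def by (simp add: cong_refl)
  thus ?thesis unfolding in_span_mod_def by (intro exI[of _ "\<lambda>j. if j = k then 1 else 0"])
qed

lemma span_sum:
  assumes "finite A" "\<forall>a\<in>A. in_span_mod p n x K (f a)"
  shows "in_span_mod p n x K (\<lambda>i. \<Sum>a\<in>A. f a i)"
  using assms
proof (induction A rule: finite_induct)
  case empty
  then show ?case using span_zero by simp
next
  case (insert a F)
  then show ?case using span_add[of p n x K "f a" "\<lambda>i. \<Sum>a\<in>F. f a i"] by simp
qed

lemma span_mono:
  assumes "in_span_mod p n x K v" "K \<subseteq> K'" "finite K'"
  shows "in_span_mod p n x K' v"
proof -
  obtain c1 where c1: "vec_eq_mod p n v (\<lambda>i. \<Sum>k\<in>K. c1 k * x k i)"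
    using assms(1) unfolding in_span_mod_def by blast
  have "(\<Sum>k\<in>K'. (if k \<in> K then c1 k else 0) * x k i) = (\<Sum>k\<in>K. c1 k * x k i)" for i
  proof -
    have "(\<Sum>k\<in>K'. (if k \<in> K then c1 k else 0) * x k i) = (\<Sum>k\<in>K'. if k \<in> K then c1 k * x k i else 0)"
      by (rule sum.cong) auto
    also have "\<dots> = (\<Sum>k\<in>K' \<inter> K. c1 k * x k i)"
      using assms(3) by (simp add: sum.inter_restrict)
    also have "K' \<inter> K = K" using assms(2) by blast
    finally show ?thesis .
  qed
  hence "vec_eq_mod p n v (\<lambda>i. \<Sum>k\<in>K'. (if k \<in> K then c1 k else 0) * x k i)"
    using c1 by simp
  thus ?thesis unfolding in_span_mod_def by (intro exI[of _ "\<lambda>k. if k \<in> K then c1 k else 0"])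
qed

lemma perm_act_vec_eq:
  assumes "g permutes {1..n}" "vec_eq_mod p n v w"
  shows "vec_eq_mod p n (perm_act g v) (perm_act g w)"
proof -
  have "Hilbert_Choice.inv g i \<in> {1..n}" if "i \<in> {1..n}" for i
    using assms(1) that by (meson permutes_in_image permutes_inv)
  thus ?thesis using assms(2) unfolding vec_eq_mod_def perm_act_def by blast
qed


lemma game_shift:
  "game_config y \<sigma> c (s + t) = game_config (\<lambda>i. y (s+i)) (\<lambda>i. \<sigma> (s+i)) (game_config y \<sigma> c s) t"
  by (induction t) simp_all

lemma game_cong_sigma:
  "(\<forall>i<t. \<sigma> i = \<sigma>' i) \<Longrightarrow> game_config y \<sigma> c t = game_config y \<sigma>' c t"
  by (induction t) simp_all

lemma V_perm:
  assumes hyp: "\<forall>j<n. \<forall>g\<in>Gs. in_span_mod p n x {..<j} (\<lambda>i. x j i - perm_act g (x j) i)"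
    and Gp: "\<forall>g\<in>Gs. g permutes {1..n}" and g: "g \<in> Gs" and j: "j \<le> n"
    and v: "in_span_mod p n x {..<j} v"
  shows "in_span_mod p n x {..<j} (perm_act g v)"
proof -
  obtain c where c: "vec_eq_mod p n v (\<lambda>i. \<Sum>k\<in>{..<j}. c k * x k i)"
    using v unfolding in_span_mod_def by blast
  have gp: "g permutes {1..n}" using Gp g by blast
  have e: "perm_act g (\<lambda>i. \<Sum>k\<in>{..<j}. c k * x k i) = (\<lambda>i. \<Sum>k\<in>{..<j}. c k * perm_act g (x k) i)"
    unfolding perm_act_def by simp
  have gx: "in_span_mod p n x {..<j} (perm_act g (x k))" if k: "k < j" for k
  proof -
    have "in_span_mod p n x {..<k} (\<lambda>i. x k i - perm_act g (x k) i)"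
      using hyp g k j by auto
    hence "in_span_mod p n x {..<j} (\<lambda>i. x k i - perm_act g (x k) i)"
      by (rule span_mono) (use k in auto)
    from span_diff[OF span_basis[of "{..<j}" k] this]
    show ?thesis using k by simp
  qed
  have "in_span_mod p n x {..<j} (\<lambda>i. \<Sum>k\<in>{..<j}. c k * perm_act g (x k) i)"
    by (rule span_sum) (auto intro: span_scale gx)
  moreover have "vec_eq_mod p n (perm_act g (\<lambda>i. \<Sum>k\<in>{..<j}. c k * x k i)) (perm_act g v)"
    using perm_act_vec_eq[OF gp c] unfolding vec_eq_mod_def by (auto simp: cong_sym)
  ultimately show ?thesis using span_cong e by metis
qed

lemma mult_lt:
  fixes p m :: nat
  assumes "m > 0" "\<not> p ^ j dvd m"
  shows "multiplicity p m < j"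
  using assms multiplicity_dvd'[of j p m] by (meson not_le)

lemma mult_block:
  fixes p b :: nat
  assumes "prime p" "0 < b" "b < p"
  shows "multiplicity p (b * p ^ j) = j"
proof -
  have "\<not> p dvd b" using assms by (meson nat_dvd_not_less)
  hence "multiplicity p b = 0" by (rule not_dvd_imp_multiplicity_0)
  moreover have "p ^ j \<noteq> 0" using assms prime_gt_0_nat by simp
  ultimately show ?thesis using assms prime_elem_multiplicity_mult_distrib[of p b "p^j"]
    by simp
qed

lemma mult_shift:
  fixes p b u :: nat
  assumes "prime p" "0 < u" "u < p ^ j"
  shows "multiplicity p (b * p ^ j + u) = multiplicity p u"
proof -
  define k where "k = multiplicity p u"
  have k1: "p ^ k dvd u" unfolding k_def by (rule multiplicity_dvd)
  have k2: "\<not> p ^ Suc k dvd u"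
  proof
    assume "p ^ Suc k dvd u"
    hence "Suc k \<le> multiplicity p u"
      using assms by (intro multiplicity_geI) (auto simp: prime_elem_def)
    thus False unfolding k_def by simp
  qed
  have kj: "k < j" using mult_lt[of u p j] assms k_def
    by (metis k1 nat_dvd_not_less dvd_trans le_imp_power_dvd not_less)
  have d1: "p ^ k dvd p ^ j" using kj by (simp add: le_imp_power_dvd)
  have d2: "p ^ Suc k dvd p ^ j" using kj le_imp_power_dvd[of "Suc k" j p] by simp
  have "p ^ k dvd b * p ^ j + u" using d1 k1 by simp
  moreover have "\<not> p ^ Suc k dvd b * p ^ j + u" using d2 k2
    by (metis dvd_add_right_iff dvd_mult)
  ultimately show ?thesis unfolding k_def[symmetric] by (rule multiplicity_eqI)
qed


lemma P_add:
  assumes "in_span_mod p n x {..<j} (\<lambda>i. v i - a * x j i)" "k < j"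
  shows "in_span_mod p n x {..<j} (\<lambda>i. (v i + x k i) - a * x j i)"
  using span_add[OF assms(1) span_basis[of "{..<j}" k]] assms(2) by (simp add: algebra_simps)

lemma P_addj:
  assumes "in_span_mod p n x {..<j} (\<lambda>i. v i - a * x j i)"
  shows "in_span_mod p n x {..<j} (\<lambda>i. (v i + x j i) - (a + 1) * x j i)"
  using assms by (simp add: algebra_simps)

lemma P_perm:
  assumes hyp: "\<forall>j<n. \<forall>g\<in>Gs. in_span_mod p n x {..<j} (\<lambda>i. x j i - perm_act g (x j) i)"
    and Gp: "\<forall>g\<in>Gs. g permutes {1..n}" and g: "g \<in> Gs" and j: "j < n"
    and v: "in_span_mod p n x {..<j} (\<lambda>i. v i - a * x j i)"
  shows "in_span_mod p n x {..<j} (\<lambda>i. perm_act g v i - a * x j i)"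
proof -
  have 1: "in_span_mod p n x {..<j} (perm_act g (\<lambda>i. v i - a * x j i))"
    by (rule V_perm[OF hyp Gp g]) (use j v in auto)
  have 2: "in_span_mod p n x {..<j} (\<lambda>i. a * (x j i - perm_act g (x j) i))"
    by (rule span_scale) (use hyp g j in auto)
  have "(\<lambda>i. perm_act g (\<lambda>i. v i - a * x j i) i - a * (x j i - perm_act g (x j) i))
        = (\<lambda>i. perm_act g v i - a * x j i)"
    unfolding perm_act_def by (simp add: algebra_simps)
  thus ?thesis using span_diff[OF 1 2] by simp
qed

lemma P_zero:
  assumes "in_span_mod (int p) n x {..<j} (\<lambda>i. v i - a * x j i)" "int p dvd a"
  shows "in_span_mod (int p) n x {..<j} v"
proof -
  have "vec_eq_mod (int p) n (\<lambda>_. 0) (\<lambda>i. a * x j i)"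
    unfolding vec_eq_mod_def using assms(2)
    by (metis cong_0_iff cong_sym dvd_mult2)
  hence "in_span_mod (int p) n x {..<j} (\<lambda>i. a * x j i)"
    using span_cong span_zero by metis
  from span_add[OF assms(1) this] show ?thesis by simp
qed

lemma P_init:
  assumes "in_span_mod p n x {..<Suc j} c"
  shows "\<exists>a. in_span_mod p n x {..<j} (\<lambda>i. c i - a * x j i)"
proof -
  obtain cc where cc: "vec_eq_mod p n c (\<lambda>i. \<Sum>k\<in>{..<Suc j}. cc k * x k i)"
    using assms unfolding in_span_mod_def by blast
  have "vec_eq_mod p n (\<lambda>i. c i - cc j * x j i) (\<lambda>i. \<Sum>k\<in>{..<j}. cc k * x k i)"
    unfolding vec_eq_mod_def
  proof
    fix i assume i: "i \<in> {1..n}"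
    have "[c i = cc j * x j i + (\<Sum>k<j. cc k * x k i)] (mod p)"
      using cc i unfolding vec_eq_mod_def by (simp add: lessThan_Suc)
    from cong_diff[OF this cong_refl[of "cc j * x j i"]]
    show "[c i - cc j * x j i = (\<Sum>k<j. cc k * x k i)] (mod p)" by simp
  qed
  thus ?thesis unfolding in_span_mod_def by blast
qed


lemma claim:
  fixes p n :: nat and x :: "nat \<Rightarrow> nat \<Rightarrow> int"
  assumes pr: "prime p"
    and hyp: "\<forall>j<n. \<forall>g\<in>Gs. in_span_mod (int p) n x {..<j} (\<lambda>i. x j i - perm_act g (x j) i)"
    and Gp: "\<forall>g\<in>Gs. g permutes {1..n}"
  shows "j \<le> n \<Longrightarrow> \<forall>y \<sigma> c. (\<forall>i. 0 < i \<and> i < p ^ j \<longrightarrow> y i = x (multiplicity p i))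
     \<longrightarrow> (\<forall>t. \<sigma> t \<in> Gs) \<longrightarrow> in_span_mod (int p) n x {..<j} c
     \<longrightarrow> (\<exists>t\<le>p ^ j - 1. vec_eq_mod (int p) n (game_config y \<sigma> c t) (\<lambda>_. 0))"
proof (induction j)
  case 0
  show ?case
  proof (intro allI impI)
    fix y \<sigma> c assume "in_span_mod (int p) n x {..<0} c"
    hence "vec_eq_mod (int p) n (game_config y \<sigma> c 0) (\<lambda>_. 0)"
      unfolding in_span_mod_def by simp
    thus "\<exists>t\<le>p ^ 0 - 1. vec_eq_mod (int p) n (game_config y \<sigma> c t) (\<lambda>_. 0)" by auto
  qed
next
  case (Suc j)
  have jn: "j < n" using Suc.prems by simp
  note IH = Suc.IH[OF less_imp_le[OF jn]]
  show ?case
  proof (intro allI impI)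
    fix y :: "nat \<Rightarrow> nat \<Rightarrow> int" and \<sigma> :: "nat \<Rightarrow> nat \<Rightarrow> nat" and c :: "nat \<Rightarrow> int"
    assume Y: "\<forall>i. 0 < i \<and> i < p ^ Suc j \<longrightarrow> y i = x (multiplicity p i)"
      and \<Sigma>: "\<forall>t. \<sigma> t \<in> Gs" and C: "in_span_mod (int p) n x {..<Suc j} c"
    define q where "q = p ^ j"
    have p0: "p > 0" using pr prime_gt_0_nat by blast
    have p1: "p > 1" using pr prime_gt_1_nat by blast
    have q0: "q > 0" unfolding q_def using p0 by simp
    have pq: "p ^ Suc j = p * q" unfolding q_def by simp
    define cfg where "cfg = game_config y \<sigma> c"
    obtain a where a: "in_span_mod (int p) n x {..<j} (\<lambda>i. c i - a * x j i)"
      using P_init[OF C] by blast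
    have blk: "b \<le> p - 1 \<Longrightarrow> in_span_mod (int p) n x {..<j} (\<lambda>i. cfg (b * q) i - (a + int b) * x j i)" for b
    proof (induction b)
      case 0
      then show ?case using a unfolding cfg_def by simp
    next
      case (Suc b)
      have bp: "Suc b < p" using Suc.prems p1 by simp
      have IHb: "in_span_mod (int p) n x {..<j} (\<lambda>i. cfg (b * q) i - (a + int b) * x j i)"
        using Suc by simp
      have inner: "u < q \<Longrightarrow> in_span_mod (int p) n x {..<j} (\<lambda>i. cfg (b * q + u) i - (a + int b) * x j i)" for u
      proof (induction u)
        case 0
        then show ?case using IHb by simp
      next
        case (Suc u)
        have lt: "Suc (b * q + u) < p ^ Suc j"
        proof -
          have "b * q + Suc u \<le> b * q + q" using Suc.prems by simp
          also have "\<dots> = Suc b * q" by simp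
          also have "\<dots> < p * q" using bp q0 by (intro mult_less_mono1) simp_all
          finally show ?thesis using pq by (simp only:)
        qed
        have m: "multiplicity p (Suc (b * q + u)) = multiplicity p (Suc u)"
          using mult_shift[OF pr, of "Suc u" j b] Suc.prems unfolding q_def by simp
        have "\<not> p ^ j dvd Suc u" using Suc.prems unfolding q_def by (simp add: nat_dvd_not_less)
        hence ml: "multiplicity p (Suc u) < j" by (rule mult_lt[rotated]) simp
        have yv: "y (Suc (b * q + u)) = x (multiplicity p (Suc u))"
          using Y lt m by simp
        have "in_span_mod (int p) n x {..<j} (\<lambda>i. (cfg (b * q + u) i + x (multiplicity p (Suc u)) i) - (a + int b) * x j i)"
          using P_add[OF Suc.IH ml] Suc.prems by simp
        from P_perm[OF hyp Gp \<Sigma>[rule_format, of "b * q + u"] jn this]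
        show ?case unfolding cfg_def using yv by (simp add: cfg_def)
      qed
      have last: "in_span_mod (int p) n x {..<j} (\<lambda>i. cfg (b * q + (q - 1)) i - (a + int b) * x j i)"
        using inner[of "q - 1"] q0 by (simp del: add_diff_assoc)
      have eq: "Suc b * q = Suc (b * q + (q - 1))" using q0 by simp
      have lt: "Suc b * q < p ^ Suc j" unfolding pq using mult_less_mono1[OF bp q0] .
      have m: "multiplicity p (Suc b * q) = j"
        using mult_block[OF pr _ bp] unfolding q_def by simp
      have yv: "y (Suc (b * q + (q - 1))) = x j" using Y lt m eq q0 by (metis zero_less_Suc)
      from P_perm[OF hyp Gp \<Sigma>[rule_format, of "b * q + (q - 1)"] jn P_addj[OF last]]
      have "in_span_mod (int p) n x {..<j} (\<lambda>i. cfg (Suc (b * q + (q - 1))) i - (a + int b + 1) * x j i)"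
        unfolding cfg_def using yv by simp
      thus ?case using eq by (simp add: algebra_simps)
    qed
    define b where "b = nat ((- a) mod int p)"
    have bint: "int b = (- a) mod int p" unfolding b_def using p0 by simp
    have "(- a) mod int p < int p" using p0 by simp
    hence "int b < int p" using bint by simp
    hence bp: "b \<le> p - 1" by simp
    have "(a + int b) mod int p = 0" unfolding bint by (simp add: mod_add_right_eq)
    hence dv: "int p dvd a + int b" by (simp add: dvd_eq_mod_eq_0)
    have Vb: "in_span_mod (int p) n x {..<j} (cfg (b * q))"
      using P_zero[OF blk[OF bp] dv] .
    have Y': "\<forall>i. 0 < i \<and> i < p ^ j \<longrightarrow> y (b * q + i) = x (multiplicity p i)"
    proof (intro allI impI)
      fix i assume i: "0 < i \<and> i < p ^ j"
      have "b * q + i < b * q + q" using i q_def by simp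
      also have "\<dots> = Suc b * q" by simp
      also have "\<dots> \<le> p * q" using bp p0 by (intro mult_le_mono1) simp
      finally have "b * q + i < p ^ Suc j" unfolding pq .
      hence "y (b * q + i) = x (multiplicity p (b * q + i))" using Y i by simp
      thus "y (b * q + i) = x (multiplicity p i)"
        using mult_shift[OF pr, of i j b] i unfolding q_def by simp
    qed
    obtain t where t: "t \<le> p ^ j - 1"
      and z: "vec_eq_mod (int p) n (game_config (\<lambda>i. y (b * q + i)) (\<lambda>i. \<sigma> (b * q + i)) (cfg (b * q)) t) (\<lambda>_. 0)"
    proof -
      have S': "\<forall>t. (\<lambda>i. \<sigma> (b * q + i)) t \<in> Gs" using \<Sigma> by simp
      have Y'': "\<forall>i. 0 < i \<and> i < p ^ j \<longrightarrow> (\<lambda>i. y (b * q + i)) i = x (multiplicity p i)"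
        using Y' by simp
      have "\<exists>t\<le>p ^ j - 1. vec_eq_mod (int p) n (game_config (\<lambda>i. y (b * q + i)) (\<lambda>i. \<sigma> (b * q + i)) (cfg (b * q)) t) (\<lambda>_. 0)"
        using IH[THEN spec, THEN spec, THEN spec, of "\<lambda>i. y (b * q + i)" "\<lambda>i. \<sigma> (b * q + i)" "cfg (b * q)"] Y'' S' Vb
        by blast
      thus ?thesis using that by blast
    qed
    have z': "vec_eq_mod (int p) n (game_config y \<sigma> c (b * q + t)) (\<lambda>_. 0)"
      using z unfolding cfg_def game_shift[symmetric] .
    have "b * q + t < b * q + q" using t q0 unfolding q_def by linarith
    also have "\<dots> = Suc b * q" by simp
    also have "\<dots> \<le> p * q" using bp p0 by (intro mult_le_mono1) simp
    finally have "b * q + t < p ^ Suc j" unfolding pq .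
    hence "b * q + t \<le> p ^ Suc j - 1" by simp
    thus "\<exists>t\<le>p ^ Suc j - 1. vec_eq_mod (int p) n (game_config y \<sigma> c t) (\<lambda>_. 0)"
      using z' by blast
  qed
qed


theorem mainTheorem12:
  fixes p n :: nat and S :: "(nat \<Rightarrow> nat) set" and x :: "nat \<Rightarrow> nat \<Rightarrow> int"
  assumes "prime p" and "n \<ge> 1"
    and "S \<subseteq> carrier (sym_group n)" and "id \<in> S"
    and "is_basis_mod (int p) n x"
    and "\<forall>j<n. \<forall>g\<in>generate (sym_group n) S.
           in_span_mod (int p) n x {..<j} (\<lambda>i. x j i - perm_act g (x j) i)"
  shows "winning_seq S (int p) n (p ^ n - 1) (\<lambda>i. x (multiplicity p i))"
  unfolding winning_seq_def
proof (intro allI impI)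
  fix c :: "nat \<Rightarrow> int" and \<sigma> :: "nat \<Rightarrow> nat \<Rightarrow> nat"
  assume \<Sigma>: "\<forall>t<p ^ n - 1. \<sigma> t \<in> S"
  define Gs where "Gs = generate (sym_group n) S"
  have inc: "Gs \<subseteq> carrier (sym_group n)"
    unfolding Gs_def by (rule group.generate_incl[OF sym_group_is_group assms(3)])
  have Gp: "\<forall>g\<in>Gs. g permutes {1..n}"
  proof
    fix g assume "g \<in> Gs"
    hence "g \<in> carrier (sym_group n)" using inc by (rule subsetD[rotated])
    thus "g permutes {1..n}" using sym_group_carrier[of g n] by (rule iffD1[rotated])
  qed
  have SG: "S \<subseteq> Gs" unfolding Gs_def by (rule subsetI) (rule generate.incl)
  define \<sigma>' where "\<sigma>' = (\<lambda>t. if t < p ^ n - 1 then \<sigma> t else id)"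
  have \<Sigma>': "\<forall>t. \<sigma>' t \<in> Gs"
  proof
    fix t show "\<sigma>' t \<in> Gs"
      using \<Sigma> SG assms(4) unfolding \<sigma>'_def by (cases "t < p ^ n - 1") auto
  qed
  have C: "in_span_mod (int p) n x {..<n} c" using assms(5) unfolding is_basis_mod_def by blast
  obtain t where t: "t \<le> p ^ n - 1"
    and z: "vec_eq_mod (int p) n (game_config (\<lambda>i. x (multiplicity p i)) \<sigma>' c t) (\<lambda>_. 0)"
  proof -
    have Y: "\<forall>i. 0 < i \<and> i < p ^ n \<longrightarrow> (\<lambda>i. x (multiplicity p i)) i = x (multiplicity p i)"
      by simp
    have "\<exists>t\<le>p ^ n - 1. vec_eq_mod (int p) n (game_config (\<lambda>i. x (multiplicity p i)) \<sigma>' c t) (\<lambda>_. 0)"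
      using claim[OF assms(1) assms(6)[folded Gs_def] Gp, of n, OF order.refl, THEN spec, THEN spec, THEN spec,
          of "\<lambda>i. x (multiplicity p i)" \<sigma>' c] Y \<Sigma>' C by (meson mp)
    thus ?thesis using that by blast
  qed
  have "game_config (\<lambda>i. x (multiplicity p i)) \<sigma>' c t = game_config (\<lambda>i. x (multiplicity p i)) \<sigma> c t"
    by (rule game_cong_sigma) (use t in \<open>simp add: \<sigma>'_def\<close>)
  thus "\<exists>t\<le>p ^ n - 1. vec_eq_mod (int p) n (game_config (\<lambda>i. x (multiplicity p i)) \<sigma> c t) (\<lambda>_. 0)"
    using t z by auto
qed

end
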